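(* Let $n\geq3$ and let $\lambda=\langle\lambda_1,\dots,\lambda_k\rangle$ be a composition of $n-1$ with $\lambda_1\geq2$ and $\lambda_k\geq2$. If $\lambda_j>\lambda_1+1$ for some $j\in\{2,\dots,k\}$, then the matrix $H_\lambda$ is not a minimal matrix representation, i.e. the $n\times(n+1)$ matrix $[0\,|\,H_\lambda]$ obtained by prepending a zero column is not a minimal matrix representation.
   Context: Definition of $H_\lambda$: partition the rows $1,\dots,n$ into consecutive blocks $R_0=\{1\},R_1,\dots,R_k$ with $|R_j|=\lambda_j$, and the columns $1,\dots,n$ into consecutive blocks $C_1,\dots,C_k,C_{k+1}=\{n\}$ with $|C_j|=\lambda_j$ for $j\le k$. $H_\lambda$ is the $n\times n$ $0/1$-matrix whose block $(R_j,C_j)$ is $I_{\lambda_j}$ for $1\le j\le k$, whose blocks $(R_i,C_j)$ with $i>j$ are zero, and whose blocks $(R_i,C_j)$ with $0\le i<j\le k+1$ are all ones if $j-i$ is odd and all zeros if $j-i$ is even. Minimal matrix representation: for $x\in\{0,1\}^n$ its column number is $(2^0,2^1,\dots,2^{n-1})x$; for an $n\times m$ $0/1$-matrix $P$ with distinct columns, $\nu(P)$ is the increasingly sorted vector of its column numbers. $P$ is a minimal matrix representation if its column numbers are strictly increasing from left to right and $\nu(P)\preceq\nu(Q)$ lexicographically for every $Q$ obtained from $P$ by complementing (exchanging $0\leftrightarrow1$) the entries of some subset of rows and then permuting rows. *)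

theory Defs
  imports Main
begin

text \<open>Conventions: matrices are functions nat => nat => nat with 0/1 entries,
  rows and columns indexed from 0. Row i (0-indexed) gets weight 2^i, so the
  paper's row 1 has weight 2^0. A composition is a list lam of positive
  naturals; lam ! (j-1) is the paper's lambda_j.\<close>

definition pstart :: "nat list \<Rightarrow> nat \<Rightarrow> nat" where
  "pstart lam j = sum_list (take j lam)"

text \<open>Block (1-based, as in the paper) containing position x of 0..sum lam - 1.\<close>
definition blk :: "nat list \<Rightarrow> nat \<Rightarrow> nat" where
  "blk lam x = Suc (LEAST j. x < pstart lam (Suc j))"

text \<open>Row block: row 0 is R_0 = {1}; row r >= 1 lies in R_a with a = blk lam (r-1).\<close>
definition rowblk :: "nat list \<Rightarrow> nat \<Rightarrow> nat" where
  "rowblk lam r = (if r = 0 then 0 else blk lam (r - 1))"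

definition rowoff :: "nat list \<Rightarrow> nat \<Rightarrow> nat" where
  "rowoff lam r = (r - 1) - pstart lam (rowblk lam r - 1)"

text \<open>Column block: column c < n-1 lies in C_b with b = blk lam c; the last column is C_{k+1}.\<close>
definition colblk :: "nat list \<Rightarrow> nat \<Rightarrow> nat" where
  "colblk lam c = (if c < sum_list lam then blk lam c else Suc (length lam))"

definition coloff :: "nat list \<Rightarrow> nat \<Rightarrow> nat" where
  "coloff lam c = c - pstart lam (colblk lam c - 1)"

definition Hmat :: "nat list \<Rightarrow> nat \<Rightarrow> nat \<Rightarrow> nat" where
  "Hmat lam r c =
     (let a = rowblk lam r; b = colblk lam c in
      if a = b then (if rowoff lam r = coloff lam c then 1 else 0)
      else if b < a then 0
      else if odd (b - a) then 1 else 0)"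

definition zeroH :: "nat list \<Rightarrow> nat \<Rightarrow> nat \<Rightarrow> nat" where
  "zeroH lam r c = (if c = 0 then 0 else Hmat lam r (c - 1))"

definition colnum :: "nat \<Rightarrow> (nat \<Rightarrow> nat \<Rightarrow> nat) \<Rightarrow> nat \<Rightarrow> nat" where
  "colnum n P j = (\<Sum>i<n. P i j * 2 ^ i)"

definition nu :: "nat \<Rightarrow> nat \<Rightarrow> (nat \<Rightarrow> nat \<Rightarrow> nat) \<Rightarrow> nat list" where
  "nu n m P = sort (map (colnum n P) [0..<m])"

definition lex_le :: "nat list \<Rightarrow> nat list \<Rightarrow> bool" where
  "lex_le xs ys \<longleftrightarrow> xs = ys \<or> (xs, ys) \<in> lexord {(a, b). a < b}"

text \<open>Complement the rows in S, then permute rows by sigma (row i of the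
  result is row sigma i of the complemented matrix).\<close>
definition comp_perm :: "(nat \<Rightarrow> nat) \<Rightarrow> nat set \<Rightarrow> (nat \<Rightarrow> nat \<Rightarrow> nat) \<Rightarrow> nat \<Rightarrow> nat \<Rightarrow> nat" where
  "comp_perm \<sigma> S P i j = (if \<sigma> i \<in> S then 1 - P (\<sigma> i) j else P (\<sigma> i) j)"

definition is_01 :: "nat \<Rightarrow> nat \<Rightarrow> (nat \<Rightarrow> nat \<Rightarrow> nat) \<Rightarrow> bool" where
  "is_01 n m P \<longleftrightarrow> (\<forall>i<n. \<forall>j<m. P i j \<in> {0, 1})"

definition minimal_rep :: "nat \<Rightarrow> nat \<Rightarrow> (nat \<Rightarrow> nat \<Rightarrow> nat) \<Rightarrow> bool" where
  "minimal_rep n m P \<longleftrightarrow>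
     is_01 n m P \<and>
     sorted_wrt (<) (map (colnum n P) [0..<m]) \<and>
     (\<forall>\<sigma> S. bij_betw \<sigma> {..<n} {..<n} \<longrightarrow> S \<subseteq> {..<n} \<longrightarrow>
        lex_le (nu n m P) (nu n m (comp_perm \<sigma> S P)))"

end

theory Submission
  imports Defs
begin

lemma pstart_Suc: "j < length lam \<Longrightarrow> pstart lam (Suc j) = pstart lam j + lam ! j"
  by (simp add: pstart_def take_Suc_conv_app_nth)

lemma pstart_mono: "i \<le> j \<Longrightarrow> pstart lam i \<le> pstart lam j"
proof -
  assume "i \<le> j"
  then have "take j lam = take i lam @ drop i (take j lam)"
    by (metis append_take_drop_id min.absorb1 take_take)
  then have "sum_list (take j lam) = sum_list (take i lam) + sum_list (drop i (take j lam))"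
    by (metis sum_list_append)
  then show ?thesis by (simp add: pstart_def)
qed

lemma pstart_len: "length lam \<le> j \<Longrightarrow> pstart lam j = sum_list lam"
  by (simp add: pstart_def)

lemma pstart_le_sum: "pstart lam j \<le> sum_list lam"
  by (metis nat_le_linear pstart_len pstart_mono)

lemma pstart_0[simp]: "pstart lam 0 = 0"
  by (simp add: pstart_def)

lemma blk_eq: "pstart lam j \<le> x \<Longrightarrow> x < pstart lam (Suc j) \<Longrightarrow> blk lam x = Suc j"
proof -
  assume a: "pstart lam j \<le> x" "x < pstart lam (Suc j)"
  have "(LEAST j'. x < pstart lam (Suc j')) = j"
  proof (rule Least_equality)
    show "x < pstart lam (Suc j)" by fact
    fix y assume "x < pstart lam (Suc y)"
    then show "j \<le> y"
      using a pstart_mono[of "Suc y" j lam] by (metis leI less_le_trans not_less_eq_eq le_trans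
          less_imp_le_nat not_le)
  qed
  then show ?thesis by (simp add: blk_def)
qed

lemma blk_char:
  assumes "x < sum_list lam"
  shows "pstart lam (blk lam x - 1) \<le> x \<and> x < pstart lam (blk lam x) \<and> blk lam x \<ge> 1"
proof -
  define L where "L = (LEAST j. x < pstart lam (Suc j))"
  have ex: "x < pstart lam (Suc (length lam))" using assms pstart_len[of lam "Suc (length lam)"] by simp
  have 1: "x < pstart lam (Suc L)" unfolding L_def by (rule LeastI, rule ex)
  have 2: "pstart lam L \<le> x"
  proof (cases L)
    case 0 then show ?thesis by simp
  next
    case (Suc L')
    then have "L' < L" by simp
    then have "\<not> x < pstart lam (Suc L')" unfolding L_def by (rule not_less_Least)
    then show ?thesis using Suc by simp
  qed
  have "blk lam x = Suc L" by (simp add: blk_def L_def)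
  then show ?thesis using 1 2 by simp
qed

lemma colnum_ind:
  assumes "A \<subseteq> {..<n}" "\<And>i. i < n \<Longrightarrow> P i j = (if i \<in> A then 1 else 0)"
  shows "colnum n P j = (\<Sum>i\<in>A. 2 ^ i)"
proof -
  have "colnum n P j = (\<Sum>i<n. (if i \<in> A then 2 ^ i else 0))"
    unfolding colnum_def by (rule sum.cong) (auto simp: assms(2))
  also have "\<dots> = (\<Sum>i\<in>{..<n} \<inter> A. 2 ^ i)"
    by (simp add: sum.inter_restrict)
  also have "{..<n} \<inter> A = A" using assms(1) by blast
  finally show ?thesis .
qed

lemma sorted_nth_le:
  fixes zs :: "nat list"
  assumes "sorted zs" "i < length zs" "A \<subseteq> set zs" "finite A" "card A > i" "\<forall>a\<in>A. a \<le> v"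
  shows "zs ! i \<le> v"
proof (rule ccontr)
  assume "\<not> zs ! i \<le> v"
  have "A \<subseteq> (\<lambda>k. zs ! k) ` {..<i}"
  proof
    fix a assume "a \<in> A"
    then obtain k where k: "k < length zs" "zs ! k = a" using assms(3) by (metis in_set_conv_nth subsetD)
    have "k < i"
    proof (rule ccontr)
      assume "\<not> k < i"
      then have "zs ! i \<le> zs ! k" using sorted_nth_mono[OF assms(1), of i k] k by simp
      then show False using \<open>a \<in> A\<close> assms(6) k \<open>\<not> zs ! i \<le> v\<close> by auto
    qed
    then show "a \<in> (\<lambda>k. zs ! k) ` {..<i}" using k by auto
  qed
  then have "card A \<le> card ((\<lambda>k. zs ! k) ` {..<i})" by (simp add: card_mono)
  also have "\<dots> \<le> i" using card_image_le[of "{..<i}" "\<lambda>k. zs ! k"] by simp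
  finally show False using assms(5) by simp
qed

lemma not_lex_le:
  fixes p q :: "nat list"
  assumes "length p = length q" "m < length p" "\<forall>i\<le>m. q ! i \<le> p ! i" "q ! m < p ! m"
  shows "\<not> lex_le p q"
proof
  assume "lex_le p q"
  moreover have "p \<noteq> q" using assms(4) by auto
  ultimately have "(p, q) \<in> lexord {(a, b). a < b}" by (simp add: lex_le_def)
  then obtain i where i: "i < length p" "take i p = take i q" "p ! i < q ! i"
    using assms(1) unfolding lexord_take_index_conv by auto
  show False
  proof (cases "i \<le> m")
    case True then show ?thesis using assms(3) i by force
  next
    case False
    then have "p ! m = q ! m" using i(2)
      by (metis not_le_imp_less nth_take)
    then show ?thesis using assms(4) by simp
  qed
qed

lemma pstart_1: "lam \<noteq> [] \<Longrightarrow> pstart lam 1 = lam ! 0"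
  using pstart_Suc[of 0 lam] by simp

lemma colblk_in:
  assumes "j < length lam" "pstart lam j \<le> c" "c < pstart lam (Suc j)"
  shows "colblk lam c = Suc j" "coloff lam c = c - pstart lam j"
proof -
  have "c < sum_list lam" using assms(3) pstart_le_sum[of lam "Suc j"] by simp
  then show "colblk lam c = Suc j" using blk_eq[OF assms(2,3)] by (simp add: colblk_def)
  then show "coloff lam c = c - pstart lam j" by (simp add: coloff_def)
qed

lemma rowblk_in:
  assumes "pstart lam j \<le> r - 1" "r - 1 < pstart lam (Suc j)" "r \<ge> 1"
  shows "rowblk lam r = Suc j" "rowoff lam r = r - 1 - pstart lam j"
proof -
  show "rowblk lam r = Suc j" using blk_eq[OF assms(1,2)] assms(3) by (simp add: rowblk_def)
  then show "rowoff lam r = r - 1 - pstart lam j" by (simp add: rowoff_def)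
qed

lemma Hmat_C1:
  assumes "lam \<noteq> []" "r < Suc (sum_list lam)" "c < lam ! 0"
  shows "Hmat lam r c = (if r = 0 \<or> r = Suc c then 1 else 0)"
proof -
  have p1: "pstart lam 1 = lam ! 0" using pstart_1[OF assms(1)] .
  have cb: "colblk lam c = 1" "coloff lam c = c"
    using colblk_in[of 0 lam c] assms p1 by auto
  show ?thesis
  proof (cases "r = 0")
    case True then show ?thesis using cb by (simp add: Hmat_def rowblk_def)
  next
    case False
    show ?thesis
    proof (cases "r - 1 < lam ! 0")
      case True
      then have "rowblk lam r = 1" "rowoff lam r = r - 1"
        using rowblk_in[of lam 0 r] p1 False by auto
      then show ?thesis using cb False by (auto simp: Hmat_def)
    next
      case F2: False
      have rl: "r - 1 < sum_list lam" using assms(2) False by simp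
      have "rowblk lam r \<noteq> 1"
      proof
        assume "rowblk lam r = 1"
        then have "blk lam (r-1) = 1" using False by (simp add: rowblk_def)
        then show False using blk_char[OF rl] p1 F2 by simp
      qed
      moreover have "rowblk lam r \<ge> 1" using blk_char[OF rl] False by (simp add: rowblk_def)
      ultimately show ?thesis using cb False F2 assms(3) by (auto simp: Hmat_def Let_def)
    qed
  qed
qed

lemma Hmat_C2:
  assumes "length lam \<ge> 2" "\<forall>x\<in>set lam. x > 0"
  shows "Hmat lam (Suc (lam ! 0)) (lam ! 0) = 1" "Hmat lam 1 (lam ! 0) = 1"
proof -
  have ne: "lam \<noteq> []" using assms(1) by auto
  have p1: "pstart lam 1 = lam ! 0" using pstart_1[OF ne] .
  have p2: "pstart lam 2 = lam ! 0 + lam ! 1" using pstart_Suc[of 1 lam] assms(1) p1 by (simp add: numeral_2_eq_2)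
  have m0: "lam ! 0 \<in> set lam" "lam ! 1 \<in> set lam" using assms(1) by (auto intro!: nth_mem)
  have pos: "lam ! 0 > 0" "lam ! 1 > 0" using assms(2) m0 by auto
  have cb: "colblk lam (lam ! 0) = 2" "coloff lam (lam ! 0) = 0"
    using colblk_in[of 1 lam "lam ! 0"] assms p1 p2 pos by (auto simp: numeral_2_eq_2)
  have rb: "rowblk lam (Suc (lam ! 0)) = 2" "rowoff lam (Suc (lam ! 0)) = 0"
    using rowblk_in[of lam 1 "Suc (lam ! 0)"] p1 p2 pos by (auto simp: numeral_2_eq_2)
  show "Hmat lam (Suc (lam ! 0)) (lam ! 0) = 1" using cb rb by (simp add: Hmat_def)
  have rb1: "rowblk lam 1 = 1"
    using rowblk_in[of lam 0 1] p1 pos by auto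
  show "Hmat lam 1 (lam ! 0) = 1" using cb rb1 by (simp add: Hmat_def)
qed

lemma Hmat_blockJ:
  assumes "jj < length lam" "s = pstart lam jj" "t < lam ! jj" "r < Suc (sum_list lam)"
  shows "(Hmat lam r (s + t) \<noteq> Hmat lam r s) \<longleftrightarrow> (t \<noteq> 0 \<and> (r = Suc s \<or> r = Suc (s + t)))"
proof -
  have pS: "pstart lam (Suc jj) = s + lam ! jj" using pstart_Suc[OF assms(1)] assms(2) by simp
  have cb: "colblk lam (s+t) = Suc jj" "coloff lam (s+t) = t"
    using colblk_in[of jj lam "s+t"] assms pS by auto
  have cb0: "colblk lam s = Suc jj" "coloff lam s = 0"
    using colblk_in[of jj lam s] assms pS by auto
  show ?thesis
  proof (cases "rowblk lam r = Suc jj")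
    case False
    moreover have "r \<noteq> Suc s" "r \<noteq> Suc (s+t)"
      using rowblk_in[of lam jj "Suc s"] rowblk_in[of lam jj "Suc (s+t)"] assms pS False by auto
    ultimately show ?thesis using cb cb0 by (auto simp: Hmat_def Let_def)
  next
    case True
    then have r1: "r \<ge> 1" by (cases "r = 0") (auto simp: rowblk_def)
    have rl: "r - 1 < sum_list lam" using assms(4) r1 by simp
    have "blk lam (r - 1) = Suc jj" using True r1 by (simp add: rowblk_def)
    then have "s \<le> r - 1" using blk_char[OF rl] assms(2) by simp
    moreover have "rowoff lam r = r - 1 - s" using True assms(2) by (simp add: rowoff_def)
    ultimately show ?thesis using cb cb0 True r1 by (auto simp: Hmat_def Let_def)
  qed
qed

definition aval :: "nat \<Rightarrow> nat" where "aval t = (if t = 0 then 0 else 1 + 2 ^ t)"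

lemma aval_less: "t < t' \<Longrightarrow> aval t < aval t'"
  by (auto simp: aval_def)

lemma aval_mono: "t \<le> t' \<Longrightarrow> aval t \<le> aval t'"
  using aval_less by (metis le_less)

lemma aval_card: "card (aval ` {..i}) = Suc i"
proof -
  have "inj_on aval {..i}"
    by (rule inj_onI) (metis aval_less nat_neq_iff less_irrefl)
  then show ?thesis by (simp add: card_image)
qed

lemma Hmat01: "Hmat lam r c \<in> {0, 1}"
  by (simp add: Hmat_def Let_def)

theorem proposition6p4:
  fixes n :: nat and lam :: "nat list"
  assumes "n \<ge> 3"
    and "lam \<noteq> []"
    and "\<forall>x\<in>set lam. x > 0"
    and "sum_list lam = n - 1"
    and "lam ! 0 \<ge> 2"
    and "last lam \<ge> 2"
    and "\<exists>j. 1 \<le> j \<and> j < length lam \<and> lam ! j > lam ! 0 + 1"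
  shows "\<not> minimal_rep n (n + 1) (zeroH lam)"
proof
  assume mr: "minimal_rep n (n + 1) (zeroH lam)"
  define P where "P = zeroH lam"
  obtain jj where jj: "1 \<le> jj" "jj < length lam" "lam ! jj > lam ! 0 + 1" using assms(7) by blast
  define L1 where "L1 = lam ! 0"
  define s where "s = pstart lam jj"
  define lj where "lj = lam ! jj"
  define m where "m = Suc L1"
  have len2: "length lam \<ge> 2" using jj by simp
  have nsum: "n = Suc (sum_list lam)" using assms(1,4) by simp
  have slj: "s + lj < n" using pstart_Suc[OF jj(2)] pstart_le_sum[of lam "Suc jj"] nsum
    unfolding s_def lj_def by simp
  have mlj: "m < lj" using jj(3) unfolding m_def L1_def lj_def by simp
  have L1n: "Suc L1 < n"
    using pstart_mono[of 1 jj lam] pstart_1[OF assms(2)] jj slj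
    unfolding L1_def s_def lj_def by simp
  have P01: "P r c \<in> {0, 1}" for r c using Hmat01 by (simp add: P_def zeroH_def)
  have P0: "colnum n P 0 = 0" by (simp add: colnum_def P_def zeroH_def)
  have PC1: "colnum n P i = aval i" if "1 \<le> i" "i \<le> L1" for i
  proof -
    have "colnum n P i = (\<Sum>r\<in>{0, i}. 2 ^ r)"
    proof (rule colnum_ind)
      show "{0, i} \<subseteq> {..<n}" using that L1n by auto
      fix r assume "r < n"
      then show "P r i = (if r \<in> {0, i} then 1 else 0)"
        using Hmat_C1[OF assms(2), of r "i - 1"] that nsum unfolding P_def zeroH_def L1_def
        by auto
    qed
    then show ?thesis using that by (simp add: aval_def)
  qed
  have PC2: "colnum n P m > aval m"
  proof -
    have "(\<Sum>r\<in>{1, Suc L1}. P r m * 2 ^ r) \<le> (\<Sum>r<n. P r m * 2 ^ r)"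
      by (rule sum_mono2) (use L1n in auto)
    moreover have "P 1 m = 1" "P (Suc L1) m = 1"
      using Hmat_C2[OF len2 assms(3)] unfolding P_def zeroH_def m_def L1_def by auto
    ultimately have "2 + 2 ^ Suc L1 \<le> colnum n P m" using assms(5) unfolding colnum_def L1_def
      by simp
    then show ?thesis unfolding aval_def m_def by simp
  qed
  define \<sigma> where "\<sigma> = (\<lambda>i::nat. if i + Suc s < n then i + Suc s else i + Suc s - n)"
  define x where "x = Suc s"
  define S where "S = {r. r < n \<and> P r x = 1}"
  define Q where "Q = comp_perm \<sigma> S P"
  have \<sigma>lt: "\<sigma> i < n" if "i < n" for i using that slj unfolding \<sigma>_def by auto
  have bij: "bij_betw \<sigma> {..<n} {..<n}"
  proof -
    have inj: "inj_on \<sigma> {..<n}"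
      by (rule inj_onI) (auto simp: \<sigma>_def split: if_splits)
    have "\<sigma> ` {..<n} = {..<n}"
      by (rule endo_inj_surj) (use \<sigma>lt inj in auto)
    then show ?thesis using inj by (simp add: bij_betw_def)
  qed
  have Sn: "S \<subseteq> {..<n}" by (auto simp: S_def)
  have Qcol: "Q i (x + t) = (if t \<noteq> 0 \<and> (i = 0 \<or> i = t) then 1 else 0)"
    if "i < n" "t < lj" for i t
  proof -
    have r: "\<sigma> i < Suc (sum_list lam)" using \<sigma>lt[OF that(1)] nsum by simp
    have bj: "(Hmat lam (\<sigma> i) (s + t) \<noteq> Hmat lam (\<sigma> i) s) \<longleftrightarrow>
        (t \<noteq> 0 \<and> (\<sigma> i = Suc s \<or> \<sigma> i = Suc (s + t)))"
      using Hmat_blockJ[OF jj(2) s_def, of t "\<sigma> i"] that r unfolding lj_def by simp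
    have e1: "\<sigma> i = Suc s \<longleftrightarrow> i = 0" using that slj unfolding \<sigma>_def by auto
    have e2: "\<sigma> i = Suc (s + t) \<longleftrightarrow> i = t" using that slj unfolding \<sigma>_def by auto
    have "Q i (x + t) = (if Hmat lam (\<sigma> i) s = 1 then 1 - Hmat lam (\<sigma> i) (s + t)
        else Hmat lam (\<sigma> i) (s + t))"
      using \<sigma>lt[OF that(1)] unfolding Q_def comp_perm_def S_def P_def zeroH_def x_def by simp
    then show ?thesis using bj e1 e2 Hmat01[of lam "\<sigma> i" s] Hmat01[of lam "\<sigma> i" "s + t"]
      by (auto split: if_splits)
  qed
  have QC: "colnum n Q (x + t) = aval t" if "t < lj" for t
  proof (cases "t = 0")
    case True
    have "colnum n Q (x + t) = (\<Sum>r\<in>{}. 2 ^ r)"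
      by (rule colnum_ind) (use Qcol[of _ 0] that True in auto)
    then show ?thesis using True by (simp add: aval_def)
  next
    case False
    have "colnum n Q (x + t) = (\<Sum>r\<in>{0, t}. 2 ^ r)"
      by (rule colnum_ind) (use Qcol that False slj in auto)
    then show ?thesis using False by (simp add: aval_def)
  qed
  define p where "p = nu n (n + 1) P"
  define q where "q = nu n (n + 1) Q"
  have sw: "sorted_wrt (<) (map (colnum n P) [0..<n + 1])" using mr unfolding minimal_rep_def P_def by blast
  have pdef: "p = map (colnum n P) [0..<n + 1]"
    unfolding p_def nu_def using sorted_sort_id[OF strict_sorted_imp_sorted[OF sw]] by simp
  have lex: "lex_le p q" using mr bij Sn unfolding minimal_rep_def p_def q_def Q_def P_def by blast
  have lp: "length p = n + 1" "length q = n + 1" by (simp_all add: pdef q_def nu_def)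
  have mn: "m < n + 1" using L1n m_def by simp
  have pn: "p ! i = colnum n P i" if "i < n + 1" for i using that unfolding pdef by (simp del: upt_Suc)
  have pa: "p ! i = aval i" if "i < m" for i
  proof (cases "i = 0")
    case True then show ?thesis using pn P0 by (simp add: aval_def)
  next
    case False then show ?thesis using pn PC1[of i] that mn unfolding m_def by simp
  qed
  have qa: "q ! i \<le> aval i" if "i \<le> m" for i
  proof -
    have "sorted q" by (simp add: q_def nu_def)
    moreover have "i < length q" using lp that mn by simp
    moreover have "aval ` {..i} \<subseteq> set q"
    proof
      fix v assume "v \<in> aval ` {..i}"
      then obtain t where t: "t \<le> i" "v = aval t" by auto
      then have "colnum n Q (x + t) = v" using QC[of t] that mlj by simp
      moreover have "x + t < n + 1" using t that mlj slj unfolding x_def by simp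
      ultimately show "v \<in> set q" unfolding q_def nu_def set_sort set_map
        by (metis atLeastLessThan_iff image_eqI le0 set_upt)
    qed
    ultimately show ?thesis
      by (rule sorted_nth_le) (auto simp: aval_card aval_mono)
  qed
  have "\<not> lex_le p q"
  proof (rule not_lex_le)
    show "length p = length q" using lp by simp
    show "m < length p" using lp mn by simp
    show "\<forall>i\<le>m. q ! i \<le> p ! i"
    proof (intro allI impI)
      fix i assume "i \<le> m"
      show "q ! i \<le> p ! i"
      proof (cases "i < m")
        case True then show ?thesis using qa pa by (simp add: less_imp_le)
      next
        case False then have "i = m" using \<open>i \<le> m\<close> by simp
        then show ?thesis using qa[of m] PC2 pn mn by simp
      qed
    qed
    show "q ! m < p ! m" using qa[of m] PC2 pn mn by simp
  qed
  then show False using lex by simp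
qed

end
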